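(* Let $\alpha\ge-1/2$, $a\ge1$, $j\in\{1,2,\dots\}$ and $k>0$. For $x,y\in\mathbb{R}_+$, $x\neq y$, let \[ I_k=\int_{-1}^1\int_0^1\xi^{-k}\beta_{\alpha+aj}(\xi)\exp\Big(-\frac{x^2+y^2+2xys}{4\xi}\Big)d\xi\,\Pi_{\alpha+aj}(ds). \] Then $I_k\le\dfrac{C_{\alpha,k}}{(x+y)^{2\alpha+1}(xy)^{aj}|x-y|^{2k}}$ with $C_{\alpha,k}$ independent of $j$, $x$, $y$.
   Context: For $m>-1$, $\beta_m(\xi)=\sqrt{\tfrac2\pi}\big(\frac{1-\xi^2}{2\xi}\big)^{1+m}\frac1{1-\xi^2}\big(\log\frac{1+\xi}{1-\xi}\big)^{-1/2}$, $\xi\in(0,1)$. For $\nu>-1/2$, $\Pi_\nu$ is the measure on $[-1,1]$ given by $\Pi_\nu(du)=\frac{(1-u^2)^{\nu-1/2}}{\sqrt\pi\,2^\nu\Gamma(\nu+1/2)}du$. *)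

theory Defs
  imports "HOL-Analysis.Analysis"
begin

definition beta_fun :: "real \<Rightarrow> real \<Rightarrow> real" where
  "beta_fun m \<xi> = sqrt (2 / pi) * ((1 - \<xi>\<^sup>2) / (2 * \<xi>)) powr (1 + m)
      * (1 / (1 - \<xi>\<^sup>2)) * (ln ((1 + \<xi>) / (1 - \<xi>))) powr (-1/2)"

definition Pi_meas :: "real \<Rightarrow> real measure" where
  "Pi_meas \<nu> = density lborel (\<lambda>u. indicator {-1..1} u *
      ennreal ((1 - u\<^sup>2) powr (\<nu> - 1/2) / (sqrt pi * 2 powr \<nu> * Gamma (\<nu> + 1/2))))"

definition I_int :: "real \<Rightarrow> real \<Rightarrow> real \<Rightarrow> real \<Rightarrow> ennreal" where
  "I_int \<nu> k x y = integral\<^sup>N (Pi_meas \<nu>) (\<lambda>s. integral\<^sup>N lborel (\<lambda>\<xi>.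
      indicator {0<..<1} \<xi> *
      ennreal (\<xi> powr (-k) * beta_fun \<nu> \<xi> * exp (-(x\<^sup>2 + y\<^sup>2 + 2 * x * y * s) / (4 * \<xi>)))))"

end

theory Submission
  imports Defs
begin



lemma s_int:
  fixes b l :: real
  assumes b: "b > 0" and l: "l > 0"
  shows "(\<integral>\<^sup>+ s. ennreal (indicator {-1..1} s * (1+s) powr (b-1) * exp (-(l*(1+s)))) \<partial>lborel)
         \<le> ennreal (Gamma b * l powr (-b))"
proof -
  define f where "f = (\<lambda>s::real. ennreal (indicator {-1..} s * (1+s) powr (b-1) * exp (-(l*(1+s)))))"
  have fm: "f \<in> borel_measurable borel" unfolding f_def by measurable
  have "(\<integral>\<^sup>+ s. ennreal (indicator {-1..1} s * (1+s) powr (b-1) * exp (-(l*(1+s)))) \<partial>lborel)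
        \<le> integral\<^sup>N lborel f"
    unfolding f_def by (intro nn_integral_mono ennreal_leI) (auto simp: indicator_def)
  also have "integral\<^sup>N lborel f = \<bar>1/l\<bar> * (\<integral>\<^sup>+r. f (-1 + (1/l) * r) \<partial>lborel)"
    using l by (intro nn_integral_real_affine fm) auto
  also have "(\<lambda>r. f (-1 + (1/l) * r)) = (\<lambda>r. ennreal (l powr (1-b)) * ennreal (indicator {0..} r * r powr (b - 1) / exp r))"
  proof
    fix r :: real
    show "f (-1 + (1/l) * r) = ennreal (l powr (1-b)) * ennreal (indicator {0..} r * r powr (b - 1) / exp r)"
    proof (cases "r \<ge> 0")
      case True
      have "(r/l) powr (b-1) = r powr (b-1) * l powr (1-b)"
        using True l by (simp add: powr_divide powr_minus_divide divide_simps powr_diff)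
      then show ?thesis using True l
        by (simp add: f_def ennreal_mult'[symmetric] indicator_def exp_minus field_simps)
    next
      case False
      have "r / l < 0" using False l by (simp add: divide_neg_pos)
      then have "\<not> (-1 \<le> -1 + r / l)" by simp
      then show ?thesis using False by (simp add: f_def indicator_def)
    qed
  qed
  also have "\<bar>1/l\<bar> * (\<integral>\<^sup>+r. ennreal (l powr (1-b)) * ennreal (indicator {0..} r * r powr (b - 1) / exp r) \<partial>lborel)
     = ennreal (1/l) * (ennreal (l powr (1-b)) * ennreal (Gamma b))"
    using l b by (subst nn_integral_cmult) (auto simp: Gamma_conv_nn_integral_real)
  also have "\<dots> = ennreal (Gamma b * l powr (-b))"
    using l b by (simp add: ennreal_mult'[symmetric] Gamma_real_pos powr_diff powr_minus field_simps)
  finally show ?thesis .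
qed

lemma s_int2:
  fixes b l m :: real
  assumes b: "b > 0" and l: "l > 0" and m: "0 < m" "m \<le> b"
  shows "(\<integral>\<^sup>+ s. ennreal (indicator {-1..1} s * (1+s) powr (b-1) * exp (-(l*(1+s)))) \<partial>lborel)
         \<le> ennreal (exp 2 * Gamma b * l powr (-m))"
proof (cases "l \<ge> 1")
  case True
  have "l powr (-b) \<le> l powr (-m)" using True m by (intro powr_mono) auto
  then have "Gamma b * l powr (-b) \<le> exp 2 * Gamma b * l powr (-m)"
    using b Gamma_real_pos[OF b] by (intro mult_mono) (auto intro: order_trans[of _ 1])
  then show ?thesis using s_int[OF b l] by (meson ennreal_leI order_trans)
next
  case False
  have "(\<integral>\<^sup>+ s. ennreal (indicator {-1..1} s * (1+s) powr (b-1) * exp (-(l*(1+s)))) \<partial>lborel)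
     \<le> (\<integral>\<^sup>+ s. ennreal (exp 2) * ennreal (indicator {-1..1} s * (1+s) powr (b-1) * exp (-(1*(1+s)))) \<partial>lborel)"
  proof (intro nn_integral_mono)
    fix s :: real
    show "ennreal (indicator {-1..1} s * (1+s) powr (b-1) * exp (-(l*(1+s))))
      \<le> ennreal (exp 2) * ennreal (indicator {-1..1} s * (1+s) powr (b-1) * exp (-(1*(1+s))))"
    proof (cases "s \<in> {-1..1}")
      case True
      have "exp (-(l*(1+s))) \<le> exp 2 * exp (-(1*(1+s)))"
      proof -
        have "0 \<le> l*(1+s)" using True l by simp
        then show ?thesis using True by (simp add: exp_add[symmetric])
      qed
      then have "(1 + s) powr (b - 1) * exp (- (l * (1 + s))) \<le> (1 + s) powr (b - 1) * (exp 2 * exp (-(1*(1+s))))"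
        by (rule mult_left_mono) simp
      also have "\<dots> = exp 2 * ((1 + s) powr (b - 1) * exp (-(1*(1+s))))"
        by (rule mult.left_commute)
      finally have le: "(1 + s) powr (b - 1) * exp (- (l * (1 + s))) \<le> exp 2 * ((1 + s) powr (b - 1) * exp (-(1*(1+s))))" .
      have eq1: "ennreal (exp 2) * ennreal (indicator {-1..1} s * (1+s) powr (b-1) * exp (-(1*(1+s))))
          = ennreal (exp 2 * ((1 + s) powr (b - 1) * exp (-(1*(1+s)))))"
        using True by (subst ennreal_mult[symmetric]) (auto simp: mult.assoc)
      have eq2: "ennreal (indicator {-1..1} s * (1+s) powr (b-1) * exp (-(l*(1+s))))
          = ennreal ((1 + s) powr (b - 1) * exp (- (l * (1 + s))))"
        using True by (simp add: mult.assoc)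
      show ?thesis using ennreal_leI[OF le] by (simp only: eq1 eq2)
    next
      case False
      then have "indicator {-1..1} s = (0::real)" by simp
      then show ?thesis by (simp only: mult_zero_left ennreal_0 zero_le)
    qed
  qed
  also have "\<dots> = ennreal (exp 2) * (\<integral>\<^sup>+ s. ennreal (indicator {-1..1} s * (1+s) powr (b-1) * exp (-(1*(1+s)))) \<partial>lborel)"
    by (intro nn_integral_cmult) measurable
  also have "\<dots> \<le> ennreal (exp 2) * ennreal (Gamma b * 1 powr (-b))"
    by (intro mult_left_mono s_int b) auto
  also have "\<dots> \<le> ennreal (exp 2 * Gamma b * l powr (-m))"
  proof -
    have "l powr m \<le> 1" using False l m by (intro powr_le1) auto
    moreover have "0 < l powr m" using l by simp
    ultimately have l1: "1 \<le> l powr (-m)" by (simp add: powr_minus one_le_inverse)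
    have "exp 2 * Gamma b * 1 \<le> exp 2 * Gamma b * l powr (-m)"
      using Gamma_real_pos[OF b] by (intro mult_left_mono l1) simp
    then have le: "exp 2 * Gamma b \<le> exp 2 * Gamma b * l powr (-m)" by simp
    have "ennreal (exp 2) * ennreal (Gamma b * 1 powr (-b)) = ennreal (exp 2 * Gamma b)"
      by (simp add: ennreal_mult'[symmetric])
    then show ?thesis using ennreal_leI[OF le] by simp
  qed
  finally show ?thesis .
qed

lemma z_pow_exp:
  fixes z :: real assumes "z \<ge> 0" "n > 0"
  shows "z ^ n \<le> real n ^ n * exp z"
proof -
  have "z / real n \<le> exp (z / real n)"
    using exp_ge_add_one_self[of "z / real n"] by linarith
  then have "(z / real n) ^ n \<le> exp (z / real n) ^ n"
    using assms by (intro power_mono) auto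
  also have "\<dots> = exp z" using assms by (simp flip: exp_of_nat_mult)
  finally show ?thesis using assms by (simp add: power_divide field_simps)
qed

definition Cxi :: "real \<Rightarrow> real" where
  "Cxi q = real (nat \<lceil>q+1\<rceil>) ^ nat \<lceil>q+1\<rceil> * 4 ^ nat \<lceil>q+1\<rceil> + 1/q"

lemma xi_int:
  fixes q A :: real
  assumes q: "q > 0" and A: "A > 0"
  shows "(\<integral>\<^sup>+ \<xi>. ennreal (indicator {0<..<1} \<xi> * \<xi> powr (-q-1) * exp (-A / (4*\<xi>))) \<partial>lborel)
         \<le> ennreal (Cxi q * A powr (-q))"
proof -
  define n where "n = nat \<lceil>q+1\<rceil>"
  define c where "c = real n ^ n * 4 ^ n"
  have n1: "real n \<ge> q + 1" unfolding n_def by linarith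
  have n0: "n > 0" using n1 q by auto
  have c0: "c \<ge> 0" unfolding c_def by simp
  have pw: "indicator {0<..<1} \<xi> * \<xi> powr (-q-1) * exp (-A / (4*\<xi>))
      \<le> indicator {0<..<A} \<xi> * (c * A powr (-q-1)) + indicator {A..} \<xi> * \<xi> powr (-q-1)" for \<xi> :: real
  proof (cases "0 < \<xi> \<and> \<xi> < 1")
    case False then show ?thesis using c0 A by (auto simp: indicator_def)
  next
    case True
    then have x0: "\<xi> > 0" by auto
    show ?thesis
    proof (cases "\<xi> < A")
      case lt: True
      define z where "z = A / (4*\<xi>)"
      have z0: "z > 0" using A x0 by (simp add: z_def)
      have "z ^ n \<le> real n ^ n * exp z" using z_pow_exp[of z n] z0 n0 by simp
      then have e: "exp (-z) \<le> real n ^ n / z ^ n"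
        using z0 by (simp add: exp_minus field_simps)
      have zn: "real n ^ n / z ^ n = c * \<xi> ^ n * A powr (- real n)"
        using A x0 by (simp add: z_def c_def power_divide powr_minus powr_realpow field_simps power_mult_distrib)
      have "\<xi> powr (-q-1) * exp (-A / (4*\<xi>)) \<le> \<xi> powr (-q-1) * (c * \<xi> ^ n * A powr (- real n))"
        using e zn by (intro mult_left_mono) (auto simp: z_def)
      also have "\<dots> = c * (\<xi> powr (real n - q - 1)) * A powr (- real n)"
      proof -
        have "\<xi> powr (-q-1) * \<xi> ^ n = \<xi> powr (real n - q - 1)"
          using x0 by (simp add: powr_realpow[symmetric] powr_add[symmetric] algebra_simps)
        then show ?thesis by (metis mult.commute mult.left_commute)
      qed
      also have "\<dots> \<le> c * (A powr (real n - q - 1)) * A powr (- real n)"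
        using x0 lt n1 c0 by (intro mult_right_mono mult_left_mono powr_mono2) auto
      also have "\<dots> = c * A powr (-q-1)"
        using A by (simp add: powr_add[symmetric])
      finally show ?thesis using True lt by (simp add: indicator_def)
    next
      case False
      have "exp (-A / (4*\<xi>)) \<le> 1" using A x0 by simp
      then have "\<xi> powr (-q-1) * exp (-A / (4*\<xi>)) \<le> \<xi> powr (-q-1)"
        by (simp add: mult_left_le)
      then show ?thesis using True False c0 A by (simp add: indicator_def)
    qed
  qed
  have "(\<integral>\<^sup>+ \<xi>. ennreal (indicator {0<..<1} \<xi> * \<xi> powr (-q-1) * exp (-A / (4*\<xi>))) \<partial>lborel)
     \<le> (\<integral>\<^sup>+ \<xi>. ennreal (c * A powr (-q-1)) * indicator {0<..<A} \<xi> + ennreal (\<xi> powr (-q-1)) * indicator {A..} \<xi> \<partial>lborel)"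
  proof (intro nn_integral_mono)
    fix \<xi> :: real
    have "ennreal (indicator {0<..<1} \<xi> * \<xi> powr (-q-1) * exp (-A / (4*\<xi>)))
       \<le> ennreal (indicator {0<..<A} \<xi> * (c * A powr (-q-1)) + indicator {A..} \<xi> * \<xi> powr (-q-1))"
      by (rule ennreal_leI[OF pw])
    also have "\<dots> = ennreal (c * A powr (-q-1)) * indicator {0<..<A} \<xi> + ennreal (\<xi> powr (-q-1)) * indicator {A..} \<xi>"
      using c0 by (auto simp: indicator_def)
    finally show "ennreal (indicator {0<..<1} \<xi> * \<xi> powr (-q-1) * exp (-A / (4*\<xi>)))
       \<le> ennreal (c * A powr (-q-1)) * indicator {0<..<A} \<xi> + ennreal (\<xi> powr (-q-1)) * indicator {A..} \<xi>" .
  qed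
  also have "\<dots> = ennreal (c * A powr (-q-1)) * emeasure lborel {0<..<A} + ennreal (A powr (-q) / q)"
  proof -
    have hi: "((\<lambda>x. x powr (-q-1)) has_integral A powr (-q) / q) {A..}"
      using has_integral_powr_to_inf[of "-q-1" A] q A by simp
    have "(\<integral>\<^sup>+ \<xi>. ennreal (\<xi> powr (-q-1)) * indicator {A..} \<xi> \<partial>lborel) = ennreal (A powr (-q) / q)"
      by (rule nn_integral_has_integral_lebesgue'[OF _ hi]) simp
    then show ?thesis
      by (subst nn_integral_add) (auto simp: nn_integral_cmult_indicator)
  qed
  also have "\<dots> = ennreal (c * A powr (-q) + A powr (-q) / q)"
    using A c0 q by (simp add: ennreal_mult'[symmetric] powr_add[symmetric] powr_diff field_simps ennreal_plus[symmetric] del: ennreal_plus)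
  also have "\<dots> = ennreal (Cxi q * A powr (-q))"
    by (simp add: Cxi_def c_def n_def field_simps)
  finally show ?thesis .
qed




lemma beta_bound:
  fixes \<nu> \<xi> :: real
  assumes "0 < \<xi>" "\<xi> < 1" "\<nu> \<ge> 0"
  shows "beta_fun \<nu> \<xi> \<le> sqrt (2/pi) * ((2*\<xi>) powr (-1-\<nu>) * \<xi> powr (-1/2))"
proof -
  have p: "0 < 1 - \<xi>\<^sup>2" using assms by (simp add: abs_square_less_1)
  have "((1 - \<xi>\<^sup>2) / (2 * \<xi>)) powr (1 + \<nu>) * (1 / (1 - \<xi>\<^sup>2))
        = (1 - \<xi>\<^sup>2) powr \<nu> * (2*\<xi>) powr (-1-\<nu>)"
  proof -
    have e1: "((1 - \<xi>\<^sup>2) / (2 * \<xi>)) powr (1 + \<nu>) = (1 - \<xi>\<^sup>2) powr (1 + \<nu>) / (2 * \<xi>) powr (1 + \<nu>)"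
      using assms p by (simp add: powr_divide)
    have e2: "(1 - \<xi>\<^sup>2) powr (1 + \<nu>) = (1 - \<xi>\<^sup>2) * (1 - \<xi>\<^sup>2) powr \<nu>"
      using p by (simp add: powr_add)
    have e3: "(2*\<xi>) powr (-1-\<nu>) = 1 / (2 * \<xi>) powr (1 + \<nu>)"
      using assms by (simp add: powr_minus[symmetric] powr_minus_divide[symmetric])
    show ?thesis unfolding e1 e2 e3 using p by simp
  qed
  also have "\<dots> \<le> 1 * (2*\<xi>) powr (-1-\<nu>)"
    using assms p by (intro mult_right_mono powr_le1) auto
  finally have A: "((1 - \<xi>\<^sup>2) / (2 * \<xi>)) powr (1 + \<nu>) * (1 / (1 - \<xi>\<^sup>2)) \<le> (2*\<xi>) powr (-1-\<nu>)" by simp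
  have L: "\<xi> \<le> ln ((1 + \<xi>) / (1 - \<xi>))"
  proof -
    have "ln (1 - \<xi>) \<le> -\<xi>" using ln_le_minus_one[of "1-\<xi>"] assms by simp
    moreover have "0 \<le> ln (1 + \<xi>)" using assms by simp
    moreover have "ln ((1 + \<xi>) / (1 - \<xi>)) = ln (1 + \<xi>) - ln (1 - \<xi>)" using assms by (simp add: ln_div)
    ultimately show ?thesis by linarith
  qed
  have B: "(ln ((1 + \<xi>) / (1 - \<xi>))) powr (-1/2) \<le> \<xi> powr (-1/2)"
    using L assms by (intro powr_mono2') auto
  have "beta_fun \<nu> \<xi> = sqrt (2/pi) * (((1 - \<xi>\<^sup>2) / (2 * \<xi>)) powr (1 + \<nu>) * (1 / (1 - \<xi>\<^sup>2)))
        * (ln ((1 + \<xi>) / (1 - \<xi>))) powr (-1/2)"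
    by (simp add: beta_fun_def mult.assoc)
  also have "\<dots> \<le> sqrt (2/pi) * ((2*\<xi>) powr (-1-\<nu>)) * \<xi> powr (-1/2)"
    using A B p by (intro mult_mono mult_left_mono) auto
  finally show ?thesis by (simp add: mult.assoc)
qed




lemma I_le:
  fixes \<nu> k x y :: real
  assumes nu: "\<nu> \<ge> 1/2" and k: "k > 0" and x: "x > 0" and y: "y > 0"
  shows "I_int \<nu> k x y \<le> (\<integral>\<^sup>+\<xi>. ennreal (indicator {0<..<1} \<xi> *
      ((1/(sqrt pi * 2 powr \<nu> * Gamma (\<nu> + 1/2))) * 2 powr (\<nu>-1/2) * sqrt (2/pi))
      * \<xi> powr (-k) * (2*\<xi>) powr (-1-\<nu>) * \<xi> powr (-1/2) * exp (-((x-y)\<^sup>2)/(4*\<xi>)))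
      * (\<integral>\<^sup>+ s. ennreal (indicator {-1..1} s * (1+s) powr ((\<nu>+1/2)-1) * exp (-(((x*y)/(2*\<xi>))*(1+s)))) \<partial>lborel) \<partial>lborel)"
proof -
  define A where "A = (x-y)\<^sup>2"
  define P where "P = x*y"
  define K where "K = (1/(sqrt pi * 2 powr \<nu> * Gamma (\<nu> + 1/2))) * 2 powr (\<nu>-1/2) * sqrt (2/pi)"
  define H where "H s \<xi> = ennreal (indicator {0<..<1} \<xi> * (\<xi> powr (-k) * (sqrt (2/pi) * ((2*\<xi>) powr (-1-\<nu>) * \<xi> powr (-1/2))) * exp (-(A + 2*P*(1+s))/(4*\<xi>))))" for s \<xi> :: real
  define dens where "dens s = indicator {-1..1} s * ennreal ((1 - s\<^sup>2) powr (\<nu> - 1/2) / (sqrt pi * 2 powr \<nu> * Gamma (\<nu> + 1/2)))" for s :: real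
  define G where "G s \<xi> = ennreal (indicator {0<..<1} \<xi> * K * \<xi> powr (-k) * (2*\<xi>) powr (-1-\<nu>) * \<xi> powr (-1/2) * exp (-A/(4*\<xi>)))
      * ennreal (indicator {-1..1} s * (1+s) powr ((\<nu>+1/2)-1) * exp (-((P/(2*\<xi>))*(1+s))))" for s \<xi> :: real
  have Hm: "case_prod H \<in> borel_measurable (lborel \<Otimes>\<^sub>M lborel)" unfolding H_def by measurable
  have Hm2: "H s \<in> borel_measurable lborel" for s unfolding H_def by measurable
  have Gm: "case_prod (\<lambda>\<xi> s. G s \<xi>) \<in> borel_measurable (lborel \<Otimes>\<^sub>M lborel)" unfolding G_def by measurable
  have step1: "I_int \<nu> k x y \<le> (\<integral>\<^sup>+ s. (\<integral>\<^sup>+ \<xi>. H s \<xi> \<partial>lborel) \<partial>Pi_meas \<nu>)"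
    unfolding I_int_def
  proof (intro nn_integral_mono)
    fix s \<xi> :: real
    show "indicator {0<..<1} \<xi> * ennreal (\<xi> powr - k * beta_fun \<nu> \<xi> * exp (- (x\<^sup>2 + y\<^sup>2 + 2 * x * y * s) / (4 * \<xi>))) \<le> H s \<xi>"
    proof (cases "\<xi> \<in> {0<..<1}")
      case True
      have e: "(x\<^sup>2 + y\<^sup>2 + 2 * x * y * s) = A + 2*P*(1+s)"
        unfolding A_def P_def by (simp add: power2_eq_square algebra_simps)
      have "\<xi> powr - k * beta_fun \<nu> \<xi> * exp (- (x\<^sup>2 + y\<^sup>2 + 2 * x * y * s) / (4 * \<xi>))
         \<le> \<xi> powr (-k) * (sqrt (2/pi) * ((2*\<xi>) powr (-1-\<nu>) * \<xi> powr (-1/2))) * exp (-(A + 2*P*(1+s))/(4*\<xi>))"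
        unfolding e using True nu by (intro mult_right_mono mult_left_mono beta_bound) auto
      then show ?thesis using True unfolding H_def by (simp add: ennreal_leI)
    next
      case False then show ?thesis by simp
    qed
  qed
  also have step2: "(\<integral>\<^sup>+ s. (\<integral>\<^sup>+ \<xi>. H s \<xi> \<partial>lborel) \<partial>Pi_meas \<nu>) = (\<integral>\<^sup>+ s. dens s * (\<integral>\<^sup>+ \<xi>. H s \<xi> \<partial>lborel) \<partial>lborel)"
    unfolding Pi_meas_def dens_def
    by (rule nn_integral_density) (use Hm in measurable)
  also have step3: "\<dots> \<le> (\<integral>\<^sup>+ s. (\<integral>\<^sup>+ \<xi>. G s \<xi> \<partial>lborel) \<partial>lborel)"
  proof (intro nn_integral_mono)
    fix s :: real
    have "dens s * (\<integral>\<^sup>+ \<xi>. H s \<xi> \<partial>lborel) = (\<integral>\<^sup>+ \<xi>. dens s * H s \<xi> \<partial>lborel)"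
      by (rule nn_integral_cmult[symmetric, OF Hm2])
    also have "\<dots> \<le> (\<integral>\<^sup>+ \<xi>. G s \<xi> \<partial>lborel)"
    proof (intro nn_integral_mono)
      fix \<xi> :: real
      show "dens s * H s \<xi> \<le> G s \<xi>"
      proof (cases "s \<in> {-1..1} \<and> \<xi> \<in> {0<..<1}")
        case False then show ?thesis unfolding dens_def H_def G_def by (auto simp: indicator_def)
      next
        case True
        have s1: "(1 - s\<^sup>2) powr (\<nu> - 1/2) \<le> 2 powr (\<nu>-1/2) * (1+s) powr ((\<nu>+1/2)-1)"
        proof -
          have "(1 - s\<^sup>2) = (1-s)*(1+s)" by (simp add: power2_eq_square algebra_simps)
          then have "(1 - s\<^sup>2) powr (\<nu> - 1/2) = (1-s) powr (\<nu> - 1/2) * (1+s) powr (\<nu> - 1/2)"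
            using True by (simp add: powr_mult)
          also have "\<dots> \<le> 2 powr (\<nu>-1/2) * (1+s) powr (\<nu> - 1/2)"
            using True nu by (intro mult_right_mono powr_mono2) auto
          finally show ?thesis by simp
        qed
        have ex: "exp (-(A + 2*P*(1+s))/(4*\<xi>)) = exp (-A/(4*\<xi>)) * exp (-((P/(2*\<xi>))*(1+s)))"
          using True by (simp add: exp_add[symmetric] field_simps)
        define D where "D = 1/(sqrt pi * 2 powr \<nu> * Gamma (\<nu> + 1/2))"
        have D0: "D \<ge> 0" unfolding D_def using nu by (simp add: Gamma_real_pos)
        define X where "X = \<xi> powr (-k) * (sqrt (2/pi) * ((2*\<xi>) powr (-1-\<nu>) * \<xi> powr (-1/2)))"
        have X0: "X \<ge> 0" unfolding X_def by simp
        have "dens s * H s \<xi> = ennreal (D * (1 - s\<^sup>2) powr (\<nu> - 1/2) * (X * exp (-(A + 2*P*(1+s))/(4*\<xi>))))"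
          using True D0 X0 unfolding dens_def H_def D_def X_def
          by (simp add: ennreal_mult'[symmetric] ennreal_mult[symmetric] mult.assoc)
        also have "\<dots> \<le> ennreal (D * (2 powr (\<nu>-1/2) * (1+s) powr ((\<nu>+1/2)-1)) * (X * exp (-(A + 2*P*(1+s))/(4*\<xi>))))"
          using s1 D0 X0 by (intro ennreal_leI mult_right_mono mult_left_mono) auto
        also have "\<dots> = G s \<xi>"
          using True unfolding G_def K_def D_def X_def ex
          by (simp add: ennreal_mult'[symmetric] ennreal_mult[symmetric] mult_ac)
        finally show ?thesis .
      qed
    qed
    finally show "dens s * (\<integral>\<^sup>+ \<xi>. H s \<xi> \<partial>lborel) \<le> (\<integral>\<^sup>+ \<xi>. G s \<xi> \<partial>lborel)" .
  qed
  also have step4: "(\<integral>\<^sup>+ s. (\<integral>\<^sup>+ \<xi>. G s \<xi> \<partial>lborel) \<partial>lborel) = (\<integral>\<^sup>+ \<xi>. (\<integral>\<^sup>+ s. G s \<xi> \<partial>lborel) \<partial>lborel)"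
    using lborel_pair.Fubini'[OF Gm] by simp
  also have step5: "\<dots> = (\<integral>\<^sup>+\<xi>. ennreal (indicator {0<..<1} \<xi> * K * \<xi> powr (-k) * (2*\<xi>) powr (-1-\<nu>) * \<xi> powr (-1/2) * exp (-A/(4*\<xi>)))
      * (\<integral>\<^sup>+ s. ennreal (indicator {-1..1} s * (1+s) powr ((\<nu>+1/2)-1) * exp (-(((P)/(2*\<xi>))*(1+s)))) \<partial>lborel) \<partial>lborel)"
    unfolding G_def by (intro nn_integral_cong nn_integral_cmult) measurable
  finally show ?thesis unfolding A_def P_def K_def .
qed




lemma alg:
  fixes \<xi> P m \<nu> k :: real
  assumes "\<xi> > 0" "P > 0"
  shows "\<xi> powr (-k) * (2*\<xi>) powr (-1-\<nu>) * \<xi> powr (-1/2) * (P/(2*\<xi>)) powr (-m)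
       = 2 powr (m-1-\<nu>) * P powr (-m) * \<xi> powr (-(k+\<nu>+1/2-m)-1)"
proof -
  have "(P/(2*\<xi>)) powr (-m) = P powr (-m) * (2 powr m * \<xi> powr m)"
    using assms by (simp add: powr_divide powr_mult powr_minus field_simps)
  moreover have "(2*\<xi>) powr (-1-\<nu>) = 2 powr (-1-\<nu>) * \<xi> powr (-1-\<nu>)"
    using assms by (simp add: powr_mult)
  moreover have "\<xi> powr (-(k+\<nu>+1/2-m)-1) = \<xi> powr (-k) * \<xi> powr (-1-\<nu>) * \<xi> powr (-1/2) * \<xi> powr m"
    using assms by (simp add: powr_add[symmetric] algebra_simps)
  moreover have "2 powr (m-1-\<nu>) = 2 powr (-1-\<nu>) * 2 powr m"
    by (simp add: powr_add[symmetric] algebra_simps)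
  ultimately show ?thesis by (simp add: mult_ac)
qed




lemma generic:
  fixes \<nu> k x y m M :: real
  assumes nu: "\<nu> \<ge> 1/2" and k: "k > 0" and x: "x > 0" and y: "y > 0" and xy: "x \<noteq> y"
    and m: "m > 0" and q: "k+\<nu>+1/2-m > 0" and M: "M \<ge> 0"
    and SIb: "\<And>l. l > 0 \<Longrightarrow> (\<integral>\<^sup>+ s. ennreal (indicator {-1..1} s * (1+s) powr ((\<nu>+1/2)-1) * exp (-(l*(1+s)))) \<partial>lborel) \<le> ennreal (M * l powr (-m))"
  shows "I_int \<nu> k x y \<le> ennreal (((1/(sqrt pi * 2 powr \<nu> * Gamma (\<nu> + 1/2))) * 2 powr (\<nu>-1/2) * sqrt (2/pi))
      * M * 2 powr (m-1-\<nu>) * (x*y) powr (-m) * (Cxi (k+\<nu>+1/2-m) * ((x-y)\<^sup>2) powr (-(k+\<nu>+1/2-m))))"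
proof -
  define K where "K = (1/(sqrt pi * 2 powr \<nu> * Gamma (\<nu> + 1/2))) * 2 powr (\<nu>-1/2) * sqrt (2/pi)"
  define A where "A = (x-y)\<^sup>2"
  define P where "P = x*y"
  define q where "q = k+\<nu>+1/2-m"
  define c where "c = K * M * 2 powr (m-1-\<nu>) * P powr (-m)"
  have K0: "K \<ge> 0" unfolding K_def using nu by (simp add: Gamma_real_pos)
  have c0: "c \<ge> 0" unfolding c_def using K0 M by simp
  have A0: "A > 0" unfolding A_def using xy by simp
  have P0: "P > 0" unfolding P_def using x y by simp
  have q0: "q > 0" unfolding q_def using q by simp
  have "I_int \<nu> k x y \<le> (\<integral>\<^sup>+\<xi>. ennreal (indicator {0<..<1} \<xi> * K
      * \<xi> powr (-k) * (2*\<xi>) powr (-1-\<nu>) * \<xi> powr (-1/2) * exp (-A/(4*\<xi>)))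
      * (\<integral>\<^sup>+ s. ennreal (indicator {-1..1} s * (1+s) powr ((\<nu>+1/2)-1) * exp (-((P/(2*\<xi>))*(1+s)))) \<partial>lborel) \<partial>lborel)"
    using I_le[OF nu k x y] unfolding K_def A_def P_def by simp
  also have "\<dots> \<le> (\<integral>\<^sup>+\<xi>. ennreal c * ennreal (indicator {0<..<1} \<xi> * \<xi> powr (-q-1) * exp (-A/(4*\<xi>))) \<partial>lborel)"
  proof (intro nn_integral_mono)
    fix \<xi> :: real
    show "ennreal (indicator {0<..<1} \<xi> * K * \<xi> powr (-k) * (2*\<xi>) powr (-1-\<nu>) * \<xi> powr (-1/2) * exp (-A/(4*\<xi>)))
      * (\<integral>\<^sup>+ s. ennreal (indicator {-1..1} s * (1+s) powr ((\<nu>+1/2)-1) * exp (-((P/(2*\<xi>))*(1+s)))) \<partial>lborel)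
      \<le> ennreal c * ennreal (indicator {0<..<1} \<xi> * \<xi> powr (-q-1) * exp (-A/(4*\<xi>)))"
    proof (cases "\<xi> \<in> {0<..<1}")
      case False then show ?thesis by simp
    next
      case True
      then have x0: "\<xi> > 0" by simp
      define E where "E = K * \<xi> powr (-k) * (2*\<xi>) powr (-1-\<nu>) * \<xi> powr (-1/2) * exp (-A/(4*\<xi>))"
      have E0: "E \<ge> 0" unfolding E_def using K0 by simp
      have "ennreal (indicator {0<..<1} \<xi> * K * \<xi> powr (-k) * (2*\<xi>) powr (-1-\<nu>) * \<xi> powr (-1/2) * exp (-A/(4*\<xi>)))
          * (\<integral>\<^sup>+ s. ennreal (indicator {-1..1} s * (1+s) powr ((\<nu>+1/2)-1) * exp (-((P/(2*\<xi>))*(1+s)))) \<partial>lborel)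
          \<le> ennreal E * ennreal (M * (P/(2*\<xi>)) powr (-m))"
        using True SIb[of "P/(2*\<xi>)"] P0 x0 unfolding E_def by (intro mult_mono) (auto simp: mult.assoc)
      also have "\<dots> = ennreal (E * (M * (P/(2*\<xi>)) powr (-m)))"
        using E0 M by (simp add: ennreal_mult)
      also have "E * (M * (P/(2*\<xi>)) powr (-m)) = c * (\<xi> powr (-q-1) * exp (-A/(4*\<xi>)))"
        unfolding E_def c_def q_def using alg[OF x0 P0, of k \<nu> m] by (simp add: mult_ac)
      also have "ennreal (c * (\<xi> powr (-q-1) * exp (-A/(4*\<xi>)))) = ennreal c * ennreal (indicator {0<..<1} \<xi> * \<xi> powr (-q-1) * exp (-A/(4*\<xi>)))"
        using True c0 by (simp add: ennreal_mult)
      finally show ?thesis .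
    qed
  qed
  also have "\<dots> = ennreal c * (\<integral>\<^sup>+\<xi>. ennreal (indicator {0<..<1} \<xi> * \<xi> powr (-q-1) * exp (-A/(4*\<xi>))) \<partial>lborel)"
    by (intro nn_integral_cmult) measurable
  also have "\<dots> \<le> ennreal c * ennreal (Cxi q * A powr (-q))"
    by (intro mult_left_mono xi_int q0 A0) simp
  also have "\<dots> = ennreal (c * (Cxi q * A powr (-q)))"
    using c0 by (simp add: ennreal_mult')
  finally show ?thesis unfolding c_def K_def q_def A_def P_def by (simp add: mult.assoc)
qed




lemma Kc:
  fixes \<nu> :: real assumes "G > 0"
  shows "(1/(sqrt pi * 2 powr \<nu> * G)) * 2 powr (\<nu>-1/2) * sqrt (2/pi) * G = 1/pi"
proof -
  have "2 powr (\<nu>-1/2) = 2 powr \<nu> / sqrt 2" by (simp add: powr_diff powr_half_sqrt)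
  moreover have "sqrt (2/pi) = sqrt 2 / sqrt pi" by (simp add: real_sqrt_divide)
  ultimately have "(1/(sqrt pi * 2 powr \<nu> * G)) * 2 powr (\<nu>-1/2) * sqrt (2/pi) * G
      = (1/(sqrt pi * 2 powr \<nu> * G)) * (2 powr \<nu> / sqrt 2) * (sqrt 2 / sqrt pi) * G" by simp
  also have "\<dots> = 1 / (sqrt pi * sqrt pi)" using assms pi_gt_zero by (simp add: field_simps)
  also have "sqrt pi * sqrt pi = pi" using pi_gt_zero by simp
  finally show ?thesis .
qed

definition Cfin :: "real \<Rightarrow> real \<Rightarrow> real" where
  "Cfin \<alpha> k = (1/pi) * 2 powr (-1/2) * Cxi k * 16 powr (\<alpha>+1/2)
     + (1/pi) * exp 2 * 2 powr (-1-\<alpha>) * Cxi (k+\<alpha>+1/2) * 4 powr (\<alpha>+1/2)"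

lemma Cxi_nonneg: "q > 0 \<Longrightarrow> Cxi q \<ge> 0"
  unfolding Cxi_def by simp

lemma main_nu:
  fixes \<alpha> \<nu> k x y :: real
  assumes al: "\<alpha> \<ge> -1/2" and nu: "\<nu> \<ge> \<alpha> + 1" and k: "k > 0" and x: "x > 0" and y: "y > 0" and xy: "x \<noteq> y"
  shows "I_int \<nu> k x y \<le> ennreal (Cfin \<alpha> k * ((x+y) powr (-(2*\<alpha>+1)) * (x*y) powr (-(\<nu>-\<alpha>)) * \<bar>x-y\<bar> powr (-(2*k))))"
proof -
  define S where "S = x + y"
  define P where "P = x*y"
  define d where "d = \<bar>x-y\<bar>"
  define e where "e = \<alpha> + 1/2"
  define T where "T = S powr (-(2*\<alpha>+1)) * P powr (-(\<nu>-\<alpha>)) * d powr (-(2*k))"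
  have S0: "S > 0" and P0: "P > 0" and d0: "d > 0" and e0: "e \<ge> 0"
    using x y xy al by (auto simp: S_def P_def d_def e_def)
  have nu2: "\<nu> \<ge> 1/2" using nu al by simp
  have G0: "Gamma (\<nu>+1/2) > 0" using nu2 by (intro Gamma_real_pos) simp
  have A: "(x-y)\<^sup>2 = d\<^sup>2" unfolding d_def by simp
  have dk: "(d\<^sup>2) powr (-r) = d powr (-(2*r))" for r
  proof -
    have "d powr (2::real) = d\<^sup>2" using powr_realpow[of d 2] d0 by simp
    then have "(d\<^sup>2) powr (-r) = (d powr (2::real)) powr (-r)" by simp
    also have "\<dots> = d powr (-(2*r))" by (simp add: powr_powr)
    finally show ?thesis .
  qed
  have Se: "S powr (-(2*\<alpha>+1)) = (S\<^sup>2) powr (-e)"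
  proof -
    have "S powr (2::real) = S\<^sup>2" using powr_realpow[of S 2] S0 by simp
    then have "(S\<^sup>2) powr (-e) = (S powr (2::real)) powr (-e)" by simp
    also have "\<dots> = S powr (2 * (-e))" by (simp add: powr_powr)
    also have "2 * (-e) = -(2*\<alpha>+1)" by (simp add: e_def)
    finally show ?thesis by simp
  qed
  define C1 where "C1 = (1/pi) * 2 powr (-1/2) * Cxi k"
  define C2 where "C2 = (1/pi) * exp 2 * 2 powr (-1-\<alpha>) * Cxi (k+\<alpha>+1/2)"
  have C10: "C1 \<ge> 0" unfolding C1_def using Cxi_nonneg[OF k] by simp
  have C20: "C2 \<ge> 0" unfolding C2_def using Cxi_nonneg[of "k+\<alpha>+1/2"] k al by simp
  have T0: "T \<ge> 0" unfolding T_def by simp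
  have Cf: "Cfin \<alpha> k = C1 * 16 powr e + C2 * 4 powr e"
    unfolding Cfin_def C1_def C2_def e_def by simp
  have goal: "I_int \<nu> k x y \<le> ennreal (Cfin \<alpha> k * T)"
  proof (cases "S\<^sup>2 \<le> 16 * P")
    case True
    have b1: "I_int \<nu> k x y \<le> ennreal (((1/(sqrt pi * 2 powr \<nu> * Gamma (\<nu> + 1/2))) * 2 powr (\<nu>-1/2) * sqrt (2/pi))
      * Gamma (\<nu>+1/2) * 2 powr ((\<nu>+1/2)-1-\<nu>) * (x*y) powr (-(\<nu>+1/2)) * (Cxi (k+\<nu>+1/2-(\<nu>+1/2)) * ((x-y)\<^sup>2) powr (-(k+\<nu>+1/2-(\<nu>+1/2)))))"
      using nu2 k x y xy G0 s_int[of "\<nu>+1/2"]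
      by (intro generic) auto
    also have "\<dots> = ennreal (C1 * P powr (-(\<nu>-\<alpha>)) * P powr (-e) * d powr (-(2*k)))"
    proof -
      have "P powr (-(\<nu>+1/2)) = P powr (-(\<nu>-\<alpha>)) * P powr (-e)"
        using P0 by (simp add: e_def powr_add[symmetric])
      then show ?thesis using Kc[OF G0, of \<nu>]
        by (simp add: C1_def A dk P_def mult_ac)
    qed
    also have "\<dots> \<le> ennreal (C1 * P powr (-(\<nu>-\<alpha>)) * (16 powr e * S powr (-(2*\<alpha>+1))) * d powr (-(2*k)))"
    proof (intro ennreal_leI mult_right_mono mult_left_mono)
      have "P powr (-e) \<le> (S\<^sup>2/16) powr (-e)"
        using True S0 e0 by (intro powr_mono2') auto
      also have "\<dots> = 16 powr e * S powr (-(2*\<alpha>+1))"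
        unfolding Se using S0 by (simp add: powr_divide powr_minus field_simps)
      finally show "P powr (-e) \<le> 16 powr e * S powr (-(2*\<alpha>+1))" .
    qed (use C10 in auto)
    also have "\<dots> \<le> ennreal (Cfin \<alpha> k * T)"
    proof (intro ennreal_leI)
      have "C1 * P powr (-(\<nu>-\<alpha>)) * (16 powr e * S powr (-(2*\<alpha>+1))) * d powr (-(2*k)) = (C1 * 16 powr e) * T"
        unfolding T_def by (simp add: mult_ac)
      also have "\<dots> \<le> Cfin \<alpha> k * T"
        unfolding Cf using C20 T0 by (intro mult_right_mono) auto
      finally show "C1 * P powr (-(\<nu>-\<alpha>)) * (16 powr e * S powr (-(2*\<alpha>+1))) * d powr (-(2*k)) \<le> Cfin \<alpha> k * T" .
    qed
    finally show ?thesis .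
  next
    case False
    have S4: "S\<^sup>2 \<le> 4 * d\<^sup>2"
    proof -
      have "S\<^sup>2 = x\<^sup>2 + 2*x*y + y\<^sup>2" "d\<^sup>2 = x\<^sup>2 - 2*x*y + y\<^sup>2" "P = x*y"
        unfolding S_def d_def P_def by (simp_all add: power2_eq_square algebra_simps)
      moreover have "x*y > 0" using x y by simp
      ultimately show ?thesis using False by linarith
    qed
    have b2: "I_int \<nu> k x y \<le> ennreal (((1/(sqrt pi * 2 powr \<nu> * Gamma (\<nu> + 1/2))) * 2 powr (\<nu>-1/2) * sqrt (2/pi))
      * (exp 2 * Gamma (\<nu>+1/2)) * 2 powr ((\<nu>-\<alpha>)-1-\<nu>) * (x*y) powr (-(\<nu>-\<alpha>)) * (Cxi (k+\<nu>+1/2-(\<nu>-\<alpha>)) * ((x-y)\<^sup>2) powr (-(k+\<nu>+1/2-(\<nu>-\<alpha>)))))"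
      using nu2 k x y xy G0 s_int2[of "\<nu>+1/2" _ "\<nu>-\<alpha>"] nu al
      by (intro generic) auto
    also have "\<dots> = ennreal (C2 * P powr (-(\<nu>-\<alpha>)) * (d\<^sup>2) powr (-e) * d powr (-(2*k)))"
    proof -
      have h1: "(d\<^sup>2) powr (-(k+\<alpha>+1/2)) = (d\<^sup>2) powr (-e) * d powr (-(2*k))"
      proof -
        have "-(k+\<alpha>+1/2) = -e + -k" by (simp add: e_def)
        then have "(d\<^sup>2) powr (-(k+\<alpha>+1/2)) = (d\<^sup>2) powr (-e) * (d\<^sup>2) powr (-k)"
          by (simp only: powr_add)
        then show ?thesis by (simp only: dk)
      qed
      have h2: "k+\<nu>+1/2-(\<nu>-\<alpha>) = k+\<alpha>+1/2" by simp
      have h3: "(\<nu>-\<alpha>)-1-\<nu> = -1-\<alpha>" by simp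
      define Kv where "Kv = (1/(sqrt pi * 2 powr \<nu> * Gamma (\<nu> + 1/2))) * 2 powr (\<nu>-1/2) * sqrt (2/pi)"
      have kv: "Kv * Gamma (\<nu> + 1/2) = 1/pi" unfolding Kv_def by (rule Kc[OF G0])
      have "Kv * (exp 2 * Gamma (\<nu>+1/2)) * 2 powr (-1-\<alpha>) * P powr (-(\<nu>-\<alpha>)) * (Cxi (k+\<alpha>+1/2) * ((d\<^sup>2) powr (-e) * d powr (-(2*k))))
         = (Kv * Gamma (\<nu>+1/2)) * exp 2 * 2 powr (-1-\<alpha>) * Cxi (k+\<alpha>+1/2) * P powr (-(\<nu>-\<alpha>)) * (d\<^sup>2) powr (-e) * d powr (-(2*k))"
        by (simp only: mult_ac)
      also have "\<dots> = C2 * P powr (-(\<nu>-\<alpha>)) * (d\<^sup>2) powr (-e) * d powr (-(2*k))"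
        unfolding kv C2_def by (simp only: mult_ac)
      finally have fin: "Kv * (exp 2 * Gamma (\<nu>+1/2)) * 2 powr (-1-\<alpha>) * P powr (-(\<nu>-\<alpha>)) * (Cxi (k+\<alpha>+1/2) * ((d\<^sup>2) powr (-e) * d powr (-(2*k))))
         = C2 * P powr (-(\<nu>-\<alpha>)) * (d\<^sup>2) powr (-e) * d powr (-(2*k))" .
      show ?thesis unfolding Kv_def[symmetric] h2 h3 A P_def[symmetric] h1 fin ..
    qed
    also have "\<dots> \<le> ennreal (C2 * P powr (-(\<nu>-\<alpha>)) * (4 powr e * S powr (-(2*\<alpha>+1))) * d powr (-(2*k)))"
    proof (intro ennreal_leI mult_right_mono mult_left_mono)
      have "(d\<^sup>2) powr (-e) \<le> (S\<^sup>2/4) powr (-e)"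
        using S4 S0 e0 by (intro powr_mono2') auto
      also have "\<dots> = 4 powr e * S powr (-(2*\<alpha>+1))"
        unfolding Se using S0 by (simp add: powr_divide powr_minus field_simps)
      finally show "(d\<^sup>2) powr (-e) \<le> 4 powr e * S powr (-(2*\<alpha>+1))" .
    qed (use C20 in auto)
    also have "\<dots> \<le> ennreal (Cfin \<alpha> k * T)"
    proof (intro ennreal_leI)
      have "C2 * P powr (-(\<nu>-\<alpha>)) * (4 powr e * S powr (-(2*\<alpha>+1))) * d powr (-(2*k)) = (C2 * 4 powr e) * T"
        unfolding T_def by (simp add: mult_ac)
      also have "\<dots> \<le> Cfin \<alpha> k * T"
        unfolding Cf using C10 T0 by (intro mult_right_mono) auto
      finally show "C2 * P powr (-(\<nu>-\<alpha>)) * (4 powr e * S powr (-(2*\<alpha>+1))) * d powr (-(2*k)) \<le> Cfin \<alpha> k * T" .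
    qed
    finally show ?thesis .
  qed
  then show ?thesis unfolding T_def S_def P_def d_def by (simp add: mult_ac)
qed



theorem mainTheorem7:
  fixes \<alpha> k :: real
  assumes "\<alpha> \<ge> -1/2" and "k > 0"
  shows "\<exists>C::real. \<forall>(a::real) (j::nat) (x::real) (y::real).
           a \<ge> 1 \<longrightarrow> j \<ge> 1 \<longrightarrow> x > 0 \<longrightarrow> y > 0 \<longrightarrow> x \<noteq> y \<longrightarrow>
           I_int (\<alpha> + a * real j) k x y
             \<le> ennreal (C / ((x + y) powr (2*\<alpha> + 1) * (x*y) powr (a * real j) * \<bar>x - y\<bar> powr (2*k)))"
proof (intro exI allI impI)
  fix a :: real and j :: nat and x y :: real
  assume a: "a \<ge> 1" and j: "j \<ge> 1" and x: "x > 0" and y: "y > 0" and xy: "x \<noteq> y"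
  have j1: "real j \<ge> 1" using j by simp
  have "a * real j \<ge> 1 * 1" using a j1 by (intro mult_mono) auto
  then have aj: "a * real j \<ge> 1" by simp
  have "I_int (\<alpha> + a * real j) k x y \<le> ennreal (Cfin \<alpha> k * ((x+y) powr (-(2*\<alpha>+1)) * (x*y) powr (-((\<alpha> + a * real j)-\<alpha>)) * \<bar>x-y\<bar> powr (-(2*k))))"
    using aj by (intro main_nu assms x y xy) auto
  also have "Cfin \<alpha> k * ((x+y) powr (-(2*\<alpha>+1)) * (x*y) powr (-((\<alpha> + a * real j)-\<alpha>)) * \<bar>x-y\<bar> powr (-(2*k)))
      = Cfin \<alpha> k / ((x + y) powr (2*\<alpha> + 1) * (x*y) powr (a * real j) * \<bar>x - y\<bar> powr (2*k))"
  proof -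
    have e1: "(x+y) powr (-(2*\<alpha>+1)) = inverse ((x+y) powr (2*\<alpha>+1))" by (rule powr_minus)
    have e2: "(x*y) powr (-((\<alpha> + a * real j)-\<alpha>)) = inverse ((x*y) powr (a * real j))"
      by (simp add: powr_minus)
    have e3: "\<bar>x-y\<bar> powr (-(2*k)) = inverse (\<bar>x-y\<bar> powr (2*k))" by (rule powr_minus)
    show ?thesis unfolding e1 e2 e3 by (simp only: divide_inverse inverse_mult_distrib mult_ac)
  qed
  finally show "I_int (\<alpha> + a * real j) k x y
      \<le> ennreal (Cfin \<alpha> k / ((x + y) powr (2*\<alpha> + 1) * (x*y) powr (a * real j) * \<bar>x - y\<bar> powr (2*k)))" .
qed

end
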